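(* For every $\epsilon>0$ there is $\eta>0$ such that for all sufficiently large $n$ the following holds. If $H$ is a $4$-uniform hypergraph on $n$ vertices containing no copy of ${\cal C}^{(4)}_3$ with $e(H)>b(n)-\eta n^4$, then there is a partition $V(H)=V_1\cup V_2$ such that all but at most $\epsilon n^4$ of the $4$-element subsets of $V(H)$ are correct with respect to this partition.
   Context: ${\cal C}^{(4)}_3$ is the $4$-uniform hypergraph with vertices $a,b,c,d,e,f$ and the three edges $abcd, abef, cdef$. For $n$ and $t$ with $n/2+t$ a nonnegative integer and $|t|\le n/2$, ${\cal B}(n,t)$ is the $4$-uniform hypergraph on $n$ vertices partitioned into parts of sizes $n/2+t$ and $n/2-t$ whose edges are all $4$-sets having exactly $1$ vertex in one part and $3$ in the other; $b(n)$ is the maximum over admissible $t$ of the number of edges of ${\cal B}(n,t)$. Given a partition $V(H)=V_1\cup V_2$, a $4$-set is good if it has $1$ point in one of $V_1,V_2$ and $3$ in the other, and bad otherwise; it is correct (with respect to $H$) if it is either a good edge of $H$ or a bad non-edge of $H$, and incorrect otherwise. *)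

theory Defs
  imports Complex_Main
begin

definition uniform4 :: "'a set \<Rightarrow> 'a set set \<Rightarrow> bool" where
  "uniform4 V E \<longleftrightarrow> finite V \<and> (\<forall>S\<in>E. S \<subseteq> V \<and> card S = 4)"

definition contains_C3 :: "'a set set \<Rightarrow> bool" where
  "contains_C3 E \<longleftrightarrow> (\<exists>a b c d e f. distinct [a, b, c, d, e, f] \<and>
      {a, b, c, d} \<in> E \<and> {a, b, e, f} \<in> E \<and> {c, d, e, f} \<in> E)"

definition good4 :: "'a set \<Rightarrow> 'a set \<Rightarrow> 'a set \<Rightarrow> bool" where
  "good4 V1 V2 S \<longleftrightarrow> (card (S \<inter> V1) = 1 \<and> card (S \<inter> V2) = 3) \<or>
                      (card (S \<inter> V1) = 3 \<and> card (S \<inter> V2) = 1)"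

definition correct4 :: "'a set \<Rightarrow> 'a set \<Rightarrow> 'a set set \<Rightarrow> 'a set \<Rightarrow> bool" where
  "correct4 V1 V2 E S \<longleftrightarrow> (good4 V1 V2 S \<and> S \<in> E) \<or> (\<not> good4 V1 V2 S \<and> S \<notin> E)"

text \<open>Edge set of B(n,t) on vertex set {0..<n}, with parts {0..<k} and {k..<n}, k = n/2 + t.\<close>
definition B_edges :: "nat \<Rightarrow> nat \<Rightarrow> nat set set" where
  "B_edges n k = {S. S \<subseteq> {..<n} \<and> card S = 4 \<and> good4 {..<k} {k..<n} S}"

definition b :: "nat \<Rightarrow> nat" where
  "b n = Max {card (B_edges n k) | k. k \<le> n}"

end

theory Submission
  imports Defs
begin



lemma card4_distinct:
  assumes "card {x1,x2,x3,x4} = (4::nat)"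
  shows "distinct [x1,x2,x3,x4]"
proof -
  have "card (set [x1,x2,x3,x4]) = length [x1,x2,x3,x4]" using assms by simp
  then show ?thesis by (rule card_distinct)
qed

lemma card4_obtain:
  assumes "card S = (4::nat)"
  obtains a b c d where "S = {a,b,c,d}" "distinct [a,b,c,d]"
proof -
  have "card S = Suc (Suc (Suc (Suc 0)))" using assms by simp
  then obtain a b c d where "S = {a,b,c,d}" "a \<notin> {b,c,d}" "b \<notin> {c,d}" "c \<noteq> d"
    by (auto simp: card_Suc_eq)
  then show ?thesis using that by auto
qed

lemma fiber24:
  assumes "finite S" "card S = 4"
  shows "card {xs. length xs = 4 \<and> distinct xs \<and> set xs \<subseteq> S} = 24"
  using card_lists_distinct_length_eq[of S 4] assms by (simp add: numeral_eq_Suc)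

lemma lists_in_E:
  assumes "uniform4 V E"
  shows "card {xs. length xs = 4 \<and> distinct xs \<and> set xs \<in> E} = 24 * card E"
proof -
  have fE: "finite E" using assms unfolding uniform4_def
    by (meson finite_Pow_iff finite_subset subsetI PowI)
  have eq: "{xs. length xs = 4 \<and> distinct xs \<and> set xs \<in> E} =
     (\<Union>S\<in>E. {xs. length xs = 4 \<and> distinct xs \<and> set xs \<subseteq> S})"
  proof (rule set_eqI, rule iffI)
    fix xs assume "xs \<in> {xs. length xs = 4 \<and> distinct xs \<and> set xs \<in> E}"
    then show "xs \<in> (\<Union>S\<in>E. {xs. length xs = 4 \<and> distinct xs \<and> set xs \<subseteq> S})" by blast
  next
    fix xs assume "xs \<in> (\<Union>S\<in>E. {xs. length xs = 4 \<and> distinct xs \<and> set xs \<subseteq> S})"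
    then obtain S where S: "S \<in> E" "length xs = 4" "distinct xs" "set xs \<subseteq> S" by blast
    have cS: "card S = 4" "finite S" using S(1) assms unfolding uniform4_def
      by (auto intro: card_ge_0_finite)
    have "card (set xs) = 4" using S distinct_card by metis
    then have "set xs = S" using card_subset_eq[OF cS(2) S(4)] cS by simp
    then show "xs \<in> {xs. length xs = 4 \<and> distinct xs \<and> set xs \<in> E}" using S by auto
  qed
  have "card (\<Union>S\<in>E. {xs. length xs = 4 \<and> distinct xs \<and> set xs \<subseteq> S}) =
        (\<Sum>S\<in>E. card {xs. length xs = 4 \<and> distinct xs \<and> set xs \<subseteq> S})"
  proof (rule card_UN_disjoint[OF fE])
    show "\<forall>S\<in>E. finite {xs. length xs = 4 \<and> distinct xs \<and> set xs \<subseteq> S}"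
    proof
      fix S assume "S \<in> E"
      then have "finite S" "card S = 4" using assms unfolding uniform4_def
        by (auto intro: card_ge_0_finite)
      then show "finite {xs. length xs = 4 \<and> distinct xs \<and> set xs \<subseteq> S}"
        using fiber24 card_ge_0_finite by (metis zero_less_numeral)
    qed
    show "\<forall>S\<in>E. \<forall>T\<in>E. S \<noteq> T \<longrightarrow>
      {xs. length xs = 4 \<and> distinct xs \<and> set xs \<subseteq> S} \<inter> {xs. length xs = 4 \<and> distinct xs \<and> set xs \<subseteq> T} = {}"
    proof (intro ballI impI)
      fix S T assume ST: "S \<in> E" "T \<in> E" "S \<noteq> T"
      show "{xs. length xs = 4 \<and> distinct xs \<and> set xs \<subseteq> S} \<inter> {xs. length xs = 4 \<and> distinct xs \<and> set xs \<subseteq> T} = {}"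
      proof (rule ccontr)
        assume "\<not> ?thesis"
        then obtain xs where xs: "length xs = 4" "distinct xs" "set xs \<subseteq> S" "set xs \<subseteq> T" by blast
        have c: "card S = 4" "finite S" "card T = 4" "finite T" using ST assms unfolding uniform4_def
          by (auto intro: card_ge_0_finite)
        have "card (set xs) = 4" using xs distinct_card by metis
        then have "set xs = S" "set xs = T" using card_subset_eq c xs by metis+
        then show False using ST by simp
      qed
    qed
  qed
  also have "\<dots> = (\<Sum>S\<in>E. 24)"
  proof (rule sum.cong[OF refl])
    fix S assume "S \<in> E"
    then have "finite S" "card S = 4" using assms unfolding uniform4_def
      by (auto intro: card_ge_0_finite)
    then show "card {xs. length xs = 4 \<and> distinct xs \<and> set xs \<subseteq> S} = 24" by (rule fiber24)
  qed
  finally show ?thesis using eq by simp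
qed



lemma count24:
  assumes "uniform4 V E"
  shows "24 * card E \<le> card {pq \<in> (V\<times>V)\<times>(V\<times>V). {fst (fst pq), snd (fst pq), fst (snd pq), snd (snd pq)} \<in> E}"
proof -
  have fV: "finite V" using assms unfolding uniform4_def by simp
  let ?X = "{pq \<in> (V\<times>V)\<times>(V\<times>V). {fst (fst pq), snd (fst pq), fst (snd pq), snd (snd pq)} \<in> E}"
  let ?h = "\<lambda>pq. [fst (fst pq), snd (fst pq), fst (snd pq), snd (snd pq)]"
  have sub: "{xs. length xs = 4 \<and> distinct xs \<and> set xs \<in> E} \<subseteq> ?h ` ?X"
  proof
    fix xs assume xs: "xs \<in> {xs. length xs = 4 \<and> distinct xs \<and> set xs \<in> E}"
    then obtain a b c d where abcd: "xs = [a,b,c,d]"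
      by (auto simp: numeral_eq_Suc length_Suc_conv)
    have "set xs \<subseteq> V" using xs assms unfolding uniform4_def by auto
    then have "((a,b),(c,d)) \<in> ?X" using xs abcd by auto
    then show "xs \<in> ?h ` ?X" using abcd by force
  qed
  have "finite ?X" using fV by auto
  then have "card (?h ` ?X) \<le> card ?X" by (rule card_image_le)
  moreover have "card {xs. length xs = 4 \<and> distinct xs \<and> set xs \<in> E} \<le> card (?h ` ?X)"
    using sub \<open>finite ?X\<close> by (intro card_mono) auto
  ultimately show ?thesis using lists_in_E[OF assms] by simp
qed



lemma lin_aux:
  fixes s dbb z dab dba d m :: real
  shows "s \<le> dbb + (z - (dab + dba)) \<Longrightarrow> d = dab + dba + dbb \<Longrightarrow> dbb \<le> m/2 - d \<Longrightarrow> z \<le> m/2 \<Longrightarrow> s \<le> 3*(m/2-d)"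
  by (smt (verit))

lemma furedi:
  fixes P :: "'p set" and adj :: "'p \<Rightarrow> 'p \<Rightarrow> bool"
  assumes fin: "finite P" and ne: "P \<noteq> {}" and sym: "\<And>p q. adj p q \<Longrightarrow> adj q p"
   and tf: "\<And>p q r. p\<in>P \<Longrightarrow> q\<in>P \<Longrightarrow> r\<in>P \<Longrightarrow> adj p q \<Longrightarrow> adj p r \<Longrightarrow> adj q r \<Longrightarrow> False"
  shows "\<exists>v\<in>P. (\<Sum>p\<in>P. \<Sum>q\<in>P. of_bool (adj p q \<noteq> (adj v p \<noteq> adj v q)) :: real)
            \<le> 3 * (real (card P)^2/2 - (\<Sum>p\<in>P. \<Sum>q\<in>P. of_bool (adj p q)))"
proof -
  define a where "a p q = (of_bool (adj p q) :: real)" for p q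
  define deg where "deg p = (\<Sum>q\<in>P. a p q)" for p
  have "Max (deg ` P) \<in> deg ` P" using fin ne by (intro Max_in) auto
  then obtain v where v1: "v \<in> P" "deg v = Max (deg ` P)" by auto
  have v2: "deg p \<le> deg v" if "p \<in> P" for p
    using v1(2) fin that by (simp add: Max_ge)
  define x where "x p = a v p" for p
  define M where "M = real (card P)"
  define X where "X = (\<Sum>p\<in>P. x p)"
  define D where "D = (\<Sum>p\<in>P. \<Sum>q\<in>P. a p q)"
  define DBB where "DBB = (\<Sum>p\<in>P. \<Sum>q\<in>P. (1 - x p) * (1 - x q) * a p q)"
  define DAB where "DAB = (\<Sum>p\<in>P. \<Sum>q\<in>P. x p * (1 - x q) * a p q)"
  define DBA where "DBA = (\<Sum>p\<in>P. \<Sum>q\<in>P. (1 - x p) * x q * a p q)"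
  have x01: "x p = 0 \<or> x p = 1" for p by (simp add: x_def a_def)
  have asym: "a p q = a q p" for p q using sym unfolding a_def by (cases "adj p q") auto
  have AA: "x p * x q * a p q = 0" if "p \<in> P" "q \<in> P" for p q
    using tf[OF v1(1) that] unfolding x_def a_def by (cases "adj v p"; cases "adj v q"; cases "adj p q") auto
  have pt: "a p q = x p * (1 - x q) * a p q + (1 - x p) * x q * a p q + (1 - x p) * (1 - x q) * a p q"
    if "p \<in> P" "q \<in> P" for p q
  proof -
    have "a p q = x p * (1 - x q) * a p q + (1 - x p) * x q * a p q + (1 - x p) * (1 - x q) * a p q
       + x p * x q * a p q" by (simp add: algebra_simps)
    then show ?thesis using AA[OF that] by simp
  qed
  have "D = (\<Sum>p\<in>P. \<Sum>q\<in>P. x p * (1 - x q) * a p q + (1 - x p) * x q * a p q + (1 - x p) * (1 - x q) * a p q)"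
    unfolding D_def by (intro sum.cong refl pt)
  also have "\<dots> = DAB + DBA + DBB" unfolding DAB_def DBA_def DBB_def by (simp only: sum.distrib)
  finally have D_split: "D = DAB + DBA + DBB" .
  have "DAB = (\<Sum>q\<in>P. \<Sum>p\<in>P. x p * (1 - x q) * a p q)" unfolding DAB_def by (rule sum.swap)
  also have "\<dots> = DBA" unfolding DBA_def by (intro sum.cong refl) (simp add: asym mult.commute)
  finally have DAB_eq: "DAB = DBA" .
  have degv: "deg v = X" by (simp add: deg_def X_def x_def)
  have sumB: "(\<Sum>p\<in>P. (1 - x p)) = M - X" by (simp add: sum_subtractf M_def X_def)
  have "(\<Sum>p\<in>P. (1 - x p) * deg p) = (\<Sum>p\<in>P. \<Sum>q\<in>P. (1 - x p) * x q * a p q + (1 - x p) * (1 - x q) * a p q)"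
    unfolding deg_def sum_distrib_left by (intro sum.cong refl) (simp add: algebra_simps)
  also have "\<dots> = DBA + DBB" unfolding DBA_def DBB_def by (simp only: sum.distrib)
  finally have e1: "(\<Sum>p\<in>P. (1 - x p) * deg p) = DBA + DBB" .
  have "(\<Sum>p\<in>P. (1 - x p) * deg p) \<le> (\<Sum>p\<in>P. (1 - x p) * X)"
  proof (rule sum_mono)
    fix p assume "p \<in> P"
    then have "deg p \<le> X" using v2 degv by simp
    moreover have "0 \<le> 1 - x p" using x01[of p] by auto
    ultimately show "(1 - x p) * deg p \<le> (1 - x p) * X" by (simp add: mult_left_mono)
  qed
  also have "\<dots> = (M - X) * X" using sumB by (simp add: sum_distrib_right[symmetric])
  finally have fur: "DBA + DBB \<le> (M - X) * X" using e1 by simp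
  have amgm: "2 * ((M - X) * X) \<le> M^2 / 2"
  proof -
    have "0 \<le> (M - 2*X)^2" by simp
    then show ?thesis by (simp add: power2_eq_square algebra_simps)
  qed
  have DBB_le: "DBB \<le> M^2/2 - D" using D_split DAB_eq fur amgm by linarith
  have mis: "of_bool (adj p q \<noteq> (adj v p \<noteq> adj v q)) \<le>
     (1 - x p) * (1 - x q) * a p q + ((x p * (1 - x q) + (1 - x p) * x q) - (x p * (1 - x q) * a p q + (1 - x p) * x q * a p q))"
    if "p \<in> P" "q \<in> P" for p q
    using tf[OF v1(1) that] unfolding x_def a_def
    by (cases "adj p q"; cases "adj v p"; cases "adj v q") auto
  have "(\<Sum>p\<in>P. \<Sum>q\<in>P. of_bool (adj p q \<noteq> (adj v p \<noteq> adj v q)) :: real) \<le>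
        (\<Sum>p\<in>P. \<Sum>q\<in>P. (1 - x p) * (1 - x q) * a p q + ((x p * (1 - x q) + (1 - x p) * x q) - (x p * (1 - x q) * a p q + (1 - x p) * x q * a p q)))"
    by (intro sum_mono mis)
  also have "\<dots> = DBB + (((\<Sum>p\<in>P. \<Sum>q\<in>P. x p * (1 - x q)) + (\<Sum>p\<in>P. \<Sum>q\<in>P. (1 - x p) * x q)) - (DAB + DBA))"
    unfolding DBB_def DAB_def DBA_def
    by (simp only: sum.distrib sum_subtractf)
  also have "(\<Sum>p\<in>P. \<Sum>q\<in>P. x p * (1 - x q)) = X * (M - X)"
    unfolding sum_product[symmetric] sumB X_def by (rule refl)
  also have "(\<Sum>p\<in>P. \<Sum>q\<in>P. (1 - x p) * x q) = (M - X) * X"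
    unfolding sum_product[symmetric] sumB X_def by (rule refl)
  finally have B0: "(\<Sum>p\<in>P. \<Sum>q\<in>P. of_bool (adj p q \<noteq> (adj v p \<noteq> adj v q)) :: real) \<le>
       DBB + ((X * (M - X) + (M - X) * X) - (DAB + DBA))" .
  have "X * (M - X) + (M - X) * X = 2 * ((M - X) * X)" by simp
  then have Yb: "X * (M - X) + (M - X) * X \<le> M^2/2" using amgm by linarith
  have "(\<Sum>p\<in>P. \<Sum>q\<in>P. of_bool (adj p q \<noteq> (adj v p \<noteq> adj v q)) :: real) \<le> 3 * (M^2/2 - D)"
    by (rule lin_aux[OF B0 D_split DBB_le Yb])
  then show ?thesis using v1(1) unfolding M_def D_def a_def by blast
qed



definition mmf :: "('a set \<Rightarrow> bool) \<Rightarrow> ('a \<Rightarrow> 'a \<Rightarrow> bool) \<Rightarrow> 'a \<Rightarrow> 'a \<Rightarrow> 'a \<Rightarrow> 'a \<Rightarrow> bool" where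
  "mmf e f a1 a2 a3 a4 = (e {a1,a2,a3,a4} \<noteq> (f a1 a2 \<noteq> f a3 a4))"

lemma avg_min:
  fixes h :: "'b \<Rightarrow> real"
  assumes "finite A" "A \<noteq> {}"
  shows "\<exists>u\<in>A. real (card A) * h u \<le> sum h A"
proof -
  have "Min (h ` A) \<in> h ` A" using assms by (intro Min_in) auto
  then obtain u where u: "u \<in> A" "h u = Min (h ` A)" by auto
  have "real (card A) * h u = (\<Sum>x\<in>A. h u)" by simp
  also have "\<dots> \<le> sum h A" using u assms by (intro sum_mono) simp
  finally show ?thesis using u by blast
qed

lemma claim1:
  assumes "g = (\<lambda>x y. ((f x y \<noteq> f u x) \<noteq> f u y))"
    and "x \<noteq> u" "y \<noteq> u" "w \<noteq> u" "x \<noteq> y" "x \<noteq> w" "y \<noteq> w" "g x y \<noteq> g x w"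
  shows "mmf e f u x y w \<or> mmf e f u y x w \<or> mmf e f u w x y"
proof -
  have s1: "{u,y,x,w} = {u,x,y,w}" "{u,w,x,y} = {u,x,y,w}" by auto
  show ?thesis using assms(8) unfolding mmf_def s1 assms(1)
    by (cases "f u x"; cases "f u y"; cases "f u w"; cases "f x y"; cases "f x w"; cases "f y w"; cases "e {u,x,y,w}") auto
qed


lemma cut_approx:
  fixes V :: "'a set" and f :: "'a \<Rightarrow> 'a \<Rightarrow> bool" and e :: "'a set \<Rightarrow> bool"
  assumes fin: "finite V" and n6: "card V \<ge> 6" and fsym: "\<And>x y. f x y = f y x"
  shows "\<exists>(\<sigma>::'a \<Rightarrow> bool) cc. real (card V)^2 * (\<Sum>x\<in>V. \<Sum>y\<in>V. of_bool (x \<noteq> y \<and> f x y \<noteq> ((\<sigma> x \<noteq> \<sigma> y) \<noteq> cc)))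
     \<le> 36 * (\<Sum>a1\<in>V. \<Sum>a2\<in>V. \<Sum>a3\<in>V. \<Sum>a4\<in>V. (of_bool (mmf e f a1 a2 a3 a4) :: real))"
proof -
  define n where "n = real (card V)"
  define mi where "mi a1 a2 a3 a4 = (of_bool (mmf e f a1 a2 a3 a4) :: real)" for a1 a2 a3 a4
  define m where "m u = (\<Sum>a2\<in>V. \<Sum>a3\<in>V. \<Sum>a4\<in>V. mi u a2 a3 a4)" for u
  define Mt where "Mt = (\<Sum>u\<in>V. m u)"
  have Vne: "V \<noteq> {}" using n6 by auto
  obtain u where u: "u \<in> V" "n * m u \<le> Mt"
    using avg_min[OF fin Vne, of m] unfolding n_def Mt_def by blast
  have mi0: "0 \<le> mi a1 a2 a3 a4" for a1 a2 a3 a4 by (simp add: mi_def)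
  have m0: "0 \<le> m u" unfolding m_def by (intro sum_nonneg mi0)
  define g where "g = (\<lambda>x y. ((f x y \<noteq> f u x) \<noteq> f u y))"
  have gsym: "g x y = g y x" for x y unfolding g_def using fsym[of x y] by auto
  define Ti where "Ti x y w = (of_bool (x \<noteq> u \<and> y \<noteq> u \<and> w \<noteq> u \<and> x \<noteq> y \<and> x \<noteq> w \<and> y \<noteq> w \<and> g x y \<noteq> g x w) :: real)" for x y w
  have Ti0: "0 \<le> Ti x y w" for x y w by (simp add: Ti_def)
  define Tt where "Tt = (\<Sum>x\<in>V. \<Sum>y\<in>V. \<Sum>w\<in>V. Ti x y w)"
  have Tpt: "Ti x y w \<le> mi u x y w + mi u y x w + mi u w x y" for x y w
  proof (cases "x \<noteq> u \<and> y \<noteq> u \<and> w \<noteq> u \<and> x \<noteq> y \<and> x \<noteq> w \<and> y \<noteq> w \<and> g x y \<noteq> g x w")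
    case True
    then have "mmf e f u x y w \<or> mmf e f u y x w \<or> mmf e f u w x y"
      using claim1[OF g_def] by blast
    then show ?thesis unfolding Ti_def mi_def using True by auto
  next
    case False
    then have "Ti x y w = 0" unfolding Ti_def by auto
    then show ?thesis using mi0[of u x y w] mi0[of u y x w] mi0[of u w x y] by simp
  qed
  have sw1: "(\<Sum>x\<in>V. \<Sum>y\<in>V. \<Sum>w\<in>V. mi u y x w) = m u"
    unfolding m_def by (rule sum.swap)
  have "(\<Sum>x\<in>V. \<Sum>y\<in>V. \<Sum>w\<in>V. mi u w x y) = (\<Sum>x\<in>V. \<Sum>w\<in>V. \<Sum>y\<in>V. mi u w x y)"
    by (rule sum.cong[OF refl], rule sum.swap)
  also have "\<dots> = (\<Sum>w\<in>V. \<Sum>x\<in>V. \<Sum>y\<in>V. mi u w x y)" by (rule sum.swap)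
  finally have sw2: "(\<Sum>x\<in>V. \<Sum>y\<in>V. \<Sum>w\<in>V. mi u w x y) = m u" unfolding m_def .
  have "Tt \<le> (\<Sum>x\<in>V. \<Sum>y\<in>V. \<Sum>w\<in>V. mi u x y w + mi u y x w + mi u w x y)"
    unfolding Tt_def by (intro sum_mono Tpt)
  also have "\<dots> = m u + (\<Sum>x\<in>V. \<Sum>y\<in>V. \<Sum>w\<in>V. mi u y x w) + (\<Sum>x\<in>V. \<Sum>y\<in>V. \<Sum>w\<in>V. mi u w x y)"
    unfolding m_def by (simp only: sum.distrib)
  finally have Tt_le: "Tt \<le> 3 * m u" using sw1 sw2 by simp
  define S1 where "S1 z = (\<Sum>y\<in>V. \<Sum>w\<in>V. Ti z y w)" for z
  define S2 where "S2 z = (\<Sum>x\<in>V. \<Sum>y\<in>V. Ti x z y)" for z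
  have S10: "0 \<le> S1 z" for z unfolding S1_def by (intro sum_nonneg Ti0)
  have S20: "0 \<le> S2 z" for z unfolding S2_def by (intro sum_nonneg Ti0)
  have sumS1: "(\<Sum>z\<in>V. S1 z) = Tt" unfolding S1_def Tt_def ..
  have sumS2: "(\<Sum>z\<in>V. S2 z) = Tt" unfolding S2_def Tt_def by (rule sum.swap)
  have cVu: "card (V - {u}) = card V - 1" using u(1) fin by simp
  have Vu_ne: "V - {u} \<noteq> {}"
  proof
    assume e0: "V - {u} = {}"
    have "card (V - {u}) = 0" by (simp only: e0 card.empty)
    then have "card V - 1 = 0" using cVu by simp
    then show False using n6 by simp
  qed
  obtain z where z: "z \<in> V - {u}" "real (card (V - {u})) * (S1 z + S2 z) \<le> (\<Sum>z\<in>V - {u}. S1 z + S2 z)"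
    using avg_min[of "V - {u}" "\<lambda>z. S1 z + S2 z"] fin Vu_ne by blast
  have "(\<Sum>z\<in>V - {u}. S1 z + S2 z) \<le> (\<Sum>z\<in>V. S1 z + S2 z)"
    using fin S10 S20 by (intro sum_mono2) (auto intro: add_nonneg_nonneg)
  also have "\<dots> = 2 * Tt" using sumS1 sumS2 by (simp add: sum.distrib)
  finally have zK: "(n - 1) * (S1 z + S2 z) \<le> 2 * Tt"
    using z(2) cVu n6 unfolding n_def by (simp add: of_nat_diff)
  have zV: "z \<in> V" "z \<noteq> u" using z(1) by auto
  define Pz where "Pz y = (y \<noteq> u \<and> y \<noteq> z \<and> g z y)" for y
  define Qz where "Qz y = (y \<noteq> u \<and> y \<noteq> z \<and> \<not> g z y)" for y
  define r where "r = (\<Sum>y\<in>V. (of_bool (Pz y) :: real))"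
  define bl where "bl = (\<Sum>y\<in>V. (of_bool (Qz y) :: real))"
  have r0: "0 \<le> r" unfolding r_def by (intro sum_nonneg) simp
  have bl0: "0 \<le> bl" unfolding bl_def by (intro sum_nonneg) simp
  have "r + bl = (\<Sum>y\<in>V. (of_bool (y \<noteq> u \<and> y \<noteq> z) :: real))"
    unfolding r_def bl_def sum.distrib[symmetric] by (intro sum.cong refl) (auto simp: Pz_def Qz_def)
  also have "\<dots> = real (card (V \<inter> {y. y \<noteq> u \<and> y \<noteq> z}))" using fin by simp
  also have "V \<inter> {y. y \<noteq> u \<and> y \<noteq> z} = V - {u, z}" by auto
  also have "card (V - {u, z}) = card V - 2" using fin u(1) zV by (simp add: card_Diff_subset)
  finally have rb: "r + bl = n - 2" using n6 unfolding n_def by (simp add: of_nat_diff)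
  have "(\<Sum>y\<in>V. \<Sum>w\<in>V. (of_bool (Pz y) * of_bool (Qz w) + of_bool (Qz y) * of_bool (Pz w) :: real)) \<le> S1 z"
    unfolding S1_def
  proof (intro sum_mono)
    fix y w
    show "(of_bool (Pz y) * of_bool (Qz w) + of_bool (Qz y) * of_bool (Pz w) :: real) \<le> Ti z y w"
      unfolding Ti_def Pz_def Qz_def using zV by auto
  qed
  moreover have "(\<Sum>y\<in>V. \<Sum>w\<in>V. (of_bool (Pz y) * of_bool (Qz w) + of_bool (Qz y) * of_bool (Pz w) :: real)) = 2 * (r * bl)"
  proof -
    have "(\<Sum>y\<in>V. \<Sum>w\<in>V. (of_bool (Pz y) * of_bool (Qz w) + of_bool (Qz y) * of_bool (Pz w) :: real))
       = (\<Sum>y\<in>V. \<Sum>w\<in>V. (of_bool (Pz y) * of_bool (Qz w) :: real)) + (\<Sum>y\<in>V. \<Sum>w\<in>V. (of_bool (Qz y) * of_bool (Pz w) :: real))"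
      by (simp only: sum.distrib)
    also have "\<dots> = r * bl + bl * r" unfolding r_def bl_def sum_product ..
    finally show ?thesis by simp
  qed
  ultimately have S1rb: "2 * (r * bl) \<le> S1 z" by simp
  define cc where "cc = (bl \<le> r)"
  define wi where "wi y = (of_bool (y \<noteq> u \<and> y \<noteq> z \<and> g z y \<noteq> cc) :: real)" for y
  define W where "W = (\<Sum>y\<in>V. wi y)"
  have wi0: "0 \<le> wi y" for y by (simp add: wi_def)
  have W0: "0 \<le> W" unfolding W_def by (intro sum_nonneg wi0)
  have WS1: "(n - 2) * W \<le> S1 z"
  proof (cases cc)
    case True
    then have "W = bl" unfolding W_def bl_def wi_def Qz_def by (intro sum.cong refl) auto
    moreover have "(r + bl) * bl \<le> 2 * (r * bl)"
    proof -
      have "bl * bl \<le> r * bl" using True bl0 unfolding cc_def by (simp add: mult_right_mono)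
      moreover have "(r + bl) * bl = r * bl + bl * bl" "(r + bl) * r = r * r + bl * r" "r * bl = bl * r"
        by (simp_all add: algebra_simps)
      ultimately show ?thesis by linarith
    qed
    ultimately show ?thesis using rb S1rb by simp
  next
    case False
    then have "W = r" unfolding W_def r_def wi_def Pz_def by (intro sum.cong refl) auto
    moreover have "(r + bl) * r \<le> 2 * (r * bl)"
    proof -
      have "r * r \<le> bl * r" using False r0 unfolding cc_def by (simp add: mult_right_mono)
      moreover have "(r + bl) * bl = r * bl + bl * bl" "(r + bl) * r = r * r + bl * r" "r * bl = bl * r"
        by (simp_all add: algebra_simps)
      ultimately show ?thesis by linarith
    qed
    ultimately show ?thesis using rb S1rb by simp
  qed
  define \<sigma> where "\<sigma> x = (if x = u then cc else f u x)" for x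
  have bpt: "(of_bool (x \<noteq> y \<and> f x y \<noteq> ((\<sigma> x \<noteq> \<sigma> y) \<noteq> cc)) :: real) \<le> wi x + wi y + Ti x z y" for x y
  proof (cases "x \<noteq> y \<and> f x y \<noteq> ((\<sigma> x \<noteq> \<sigma> y) \<noteq> cc)")
    case False
    then have "(of_bool (x \<noteq> y \<and> f x y \<noteq> ((\<sigma> x \<noteq> \<sigma> y) \<noteq> cc)) :: real) = 0" by (subst of_bool_eq_0_iff) (rule False)
    then show ?thesis using wi0[of x] wi0[of y] Ti0[of x z y] by linarith
  next
    case True
    have xu: "x \<noteq> u"
    proof
      assume "x = u" then show False using True unfolding \<sigma>_def by auto
    qed
    have yu: "y \<noteq> u"
    proof
      assume "y = u" then show False using True fsym[of x u] unfolding \<sigma>_def by auto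
    qed
    have gxy: "g x y \<noteq> cc" using True xu yu unfolding \<sigma>_def g_def by auto
    have "wi x = 1 \<or> wi y = 1 \<or> Ti x z y = 1"
    proof (cases "x = z")
      case True
      then show ?thesis using gxy yu \<open>x \<noteq> y \<and> _\<close> unfolding wi_def by auto
    next
      case xz: False
      show ?thesis
      proof (cases "y = z")
        case True
        then show ?thesis using gxy xu xz gsym[of x z] unfolding wi_def by auto
      next
        case yz: False
        show ?thesis
        proof (cases "g z x = cc")
          case False
          then show ?thesis using xu xz unfolding wi_def by auto
        next
          case True
          then have "g x z \<noteq> g x y" using gsym[of x z] gxy by auto
          then show ?thesis using xu yu xz yz zV \<open>x \<noteq> y \<and> _\<close> unfolding Ti_def by auto
        qed
      qed
    qed
    then show ?thesis using True wi0[of x] wi0[of y] Ti0[of x z y] by auto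
  qed
  define Bd where "Bd = (\<Sum>x\<in>V. \<Sum>y\<in>V. (of_bool (x \<noteq> y \<and> f x y \<noteq> ((\<sigma> x \<noteq> \<sigma> y) \<noteq> cc)) :: real))"
  have "Bd \<le> (\<Sum>x\<in>V. \<Sum>y\<in>V. wi x + wi y + Ti x z y)"
    unfolding Bd_def by (intro sum_mono bpt)
  also have "\<dots> = (\<Sum>x\<in>V. \<Sum>y\<in>V. wi x) + (\<Sum>x\<in>V. \<Sum>y\<in>V. wi y) + S2 z"
    unfolding S2_def by (simp only: sum.distrib)
  also have "(\<Sum>x\<in>V. \<Sum>y\<in>V. wi x) = n * W" unfolding W_def n_def by (simp add: sum_distrib_left)
  also have "(\<Sum>x\<in>V. \<Sum>y\<in>V. wi y) = n * W" unfolding W_def n_def by simp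
  finally have Bd1: "Bd \<le> 2 * n * W + S2 z" by (simp add: mult.commute mult.left_commute)
  have n6r: "6 \<le> n" using n6 unfolding n_def by simp
  have "0 \<le> (n - 6) * W" using W0 n6r by simp
  moreover have "3 * ((n - 2) * W) - 2 * n * W = (n - 6) * W" by (simp add: algebra_simps)
  ultimately have "2 * n * W \<le> 3 * ((n - 2) * W)" by linarith
  then have Bd2: "Bd \<le> 3 * (S1 z + S2 z)" using Bd1 WS1 S20[of z] by (smt (verit))
  define K where "K = S1 z + S2 z"
  have K0: "0 \<le> K" unfolding K_def using S10 S20 by (simp add: add_nonneg_nonneg)
  have "n^2 * Bd \<le> n^2 * (3 * K)" using Bd2 unfolding K_def by (simp add: mult_left_mono)
  also have "\<dots> \<le> (2 * n * (n - 1)) * (3 * K)"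
  proof (rule mult_right_mono)
    have "0 \<le> n * (n - 2)" using n6r by simp
    moreover have "2 * n * (n - 1) - n^2 = n * (n - 2)" by (simp add: power2_eq_square algebra_simps)
    ultimately show "n^2 \<le> 2 * n * (n - 1)" by linarith
    show "0 \<le> 3 * K" using K0 by simp
  qed
  also have "\<dots> = 6 * n * ((n - 1) * K)" by (simp add: algebra_simps)
  also have "\<dots> \<le> 6 * n * (6 * m u)"
    using zK Tt_le n6r unfolding K_def by (intro mult_left_mono) auto
  also have "\<dots> = 36 * (n * m u)" by simp
  also have "\<dots> \<le> 36 * Mt" using u(2) by simp
  finally have "n^2 * Bd \<le> 36 * Mt" .
  then have fin1: "real (card V)^2 * (\<Sum>x\<in>V. \<Sum>y\<in>V. of_bool (x \<noteq> y \<and> f x y \<noteq> ((\<sigma> x \<noteq> \<sigma> y) \<noteq> cc)))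
     \<le> 36 * (\<Sum>a1\<in>V. \<Sum>a2\<in>V. \<Sum>a3\<in>V. \<Sum>a4\<in>V. (of_bool (mmf e f a1 a2 a3 a4) :: real))"
    unfolding n_def Bd_def Mt_def m_def mi_def .
  show ?thesis by (rule exI[of _ \<sigma>], rule exI[of _ cc], rule fin1)
qed



lemma choose3_real: "real (k choose 3) = real k * (real k - 1) * (real k - 2) / 6"
proof -
  have "real (k choose 3) = real k gchoose 3" by (simp add: binomial_gbinomial)
  also have "\<dots> = pochhammer (real k - 3 + 1) 3 / fact 3" by (simp add: gbinomial_pochhammer')
  also have "\<dots> = real k * (real k - 1) * (real k - 2) / 6"
    by (simp add: pochhammer_Suc numeral_3_eq_3 fact_numeral algebra_simps)
  finally show ?thesis .
qed

lemma diff_le_aux: fixes x y z :: real shows "x - y = z \<Longrightarrow> 0 \<le> z \<Longrightarrow> y \<le> x" by simp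

lemma poly_even: fixes K :: real assumes "0 \<le> K"
  shows "(2*K)^4/48 - 20*(2*K)^3/48 \<le> K * (K * (K - 1) * (K - 2) / 6) + K * (K * (K - 1) * (K - 2) / 6)"
proof -
  have "K * (K * (K - 1) * (K - 2) / 6) + K * (K * (K - 1) * (K - 2) / 6) - ((2*K)^4/48 - 20*(2*K)^3/48)
     = (7 * K^3 + 2 * K^2) / 3"
    by (simp add: algebra_simps power2_eq_square power3_eq_cube power4_eq_xxxx)
  moreover have "0 \<le> (7 * K^3 + 2 * K^2) / 3" using assms by simp
  ultimately show ?thesis by (rule diff_le_aux)
qed

lemma poly_odd: fixes K :: real assumes "0 \<le> K"
  shows "(2*K+1)^4/48 - 20*(2*K+1)^3/48 \<le> K * ((K+1) * (K + 1 - 1) * (K + 1 - 2) / 6) + (K+1) * (K * (K - 1) * (K - 2) / 6)"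
proof -
  have "K * ((K+1) * (K + 1 - 1) * (K + 1 - 2) / 6) + (K+1) * (K * (K - 1) * (K - 2) / 6) - ((2*K+1)^4/48 - 20*(2*K+1)^3/48)
     = (112 * K^3 + 200 * K^2 + 128 * K + 19) / 48"
    by (simp add: field_simps power2_eq_square power3_eq_cube power4_eq_xxxx; simp add: algebra_simps)
  moreover have "0 \<le> (112 * K^3 + 200 * K^2 + 128 * K + 19) / 48" using assms by simp
  ultimately show ?thesis by (rule diff_le_aux)
qed


lemma ins_lo:
  fixes a k n :: nat
  assumes "a < k" "T \<subseteq> {k..<n}" "card T = 3" "k \<le> n"
  shows "insert a T \<subseteq> {..<n}" "card (insert a T) = 4" "insert a T \<inter> {..<k} = {a}" "insert a T \<inter> {k..<n} = T"
proof -
  have fT: "finite T" using finite_subset[OF assms(2)] by simp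
  have aT: "a \<notin> T" using assms(1,2) by auto
  show "insert a T \<subseteq> {..<n}" using assms by auto
  show "card (insert a T) = 4" using fT aT assms(3) by simp
  show "insert a T \<inter> {..<k} = {a}" using assms(1,2) by auto
  show "insert a T \<inter> {k..<n} = T" using assms(1,2) by auto
qed

lemma ins_hi:
  fixes a k n :: nat
  assumes "a \<in> {k..<n}" "T \<subseteq> {..<k}" "card T = 3"
  shows "insert a T \<subseteq> {..<n}" "card (insert a T) = 4" "insert a T \<inter> {..<k} = T" "insert a T \<inter> {k..<n} = {a}"
proof -
  have fT: "finite T" using finite_subset[OF assms(2)] by simp
  have aT: "a \<notin> T" using assms(1,2) by auto
  show "insert a T \<subseteq> {..<n}" using assms by auto
  show "card (insert a T) = 4" using fT aT assms(3) by simp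
  show "insert a T \<inter> {..<k} = T" using assms(1,2) by auto
  show "insert a T \<inter> {k..<n} = {a}" using assms(1,2) by auto
qed

lemma card_B:
  assumes "k \<le> n"
  shows "k * ((n - k) choose 3) + (n - k) * (k choose 3) \<le> card (B_edges n k)"
proof -
  define T1 where "T1 = {T. T \<subseteq> {k..<n} \<and> card T = 3}"
  define T2 where "T2 = {T. T \<subseteq> {..<k} \<and> card T = 3}"
  define F1 where "F1 = (\<lambda>(a,T). insert a T) ` ({..<k} \<times> T1)"
  define F2 where "F2 = (\<lambda>(a,T). insert a T) ` ({k..<n} \<times> T2)"
  have inj1: "inj_on (\<lambda>(a,T). insert a T) ({..<k} \<times> T1)"
  proof (rule inj_onI)
    fix x y assume hx: "x \<in> {..<k} \<times> T1" "y \<in> {..<k} \<times> T1" "(\<lambda>(a,T). insert a T) x = (\<lambda>(a,T). insert a T) y"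
    obtain a T where x: "x = (a,T)" by (cases x)
    obtain a' T' where y: "y = (a',T')" by (cases y)
    have h: "a \<in> {..<k}" "T \<in> T1" "a' \<in> {..<k}" "T' \<in> T1" "insert a T = insert a' T'"
      using hx x y by auto
    have h1: "a < k" "T \<subseteq> {k..<n}" "card T = 3" using h(1,2) unfolding T1_def by auto
    have h2: "a' < k" "T' \<subseteq> {k..<n}" "card T' = 3" using h(3,4) unfolding T1_def by auto
    have e1: "insert a T \<inter> {..<k} = {a}" "insert a T \<inter> {k..<n} = T" using ins_lo[OF h1 assms] by simp_all
    have e2: "insert a' T' \<inter> {..<k} = {a'}" "insert a' T' \<inter> {k..<n} = T'" using ins_lo[OF h2 assms] by simp_all
    have "{a} = {a'}" using e1(1) e2(1) h(5) by simp
    moreover have "T = T'" using e1(2) e2(2) h(5) by simp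
    ultimately show "x = y" using x y by simp
  qed
  have inj2: "inj_on (\<lambda>(a,T). insert a T) ({k..<n} \<times> T2)"
  proof (rule inj_onI)
    fix x y assume hx: "x \<in> {k..<n} \<times> T2" "y \<in> {k..<n} \<times> T2" "(\<lambda>(a,T). insert a T) x = (\<lambda>(a,T). insert a T) y"
    obtain a T where x: "x = (a,T)" by (cases x)
    obtain a' T' where y: "y = (a',T')" by (cases y)
    have h: "a \<in> {k..<n}" "T \<in> T2" "a' \<in> {k..<n}" "T' \<in> T2" "insert a T = insert a' T'"
      using hx x y by auto
    have h1: "a \<in> {k..<n}" "T \<subseteq> {..<k}" "card T = 3" using h(1,2) unfolding T2_def by auto
    have h2: "a' \<in> {k..<n}" "T' \<subseteq> {..<k}" "card T' = 3" using h(3,4) unfolding T2_def by auto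
    have e1: "insert a T \<inter> {..<k} = T" "insert a T \<inter> {k..<n} = {a}" using ins_hi[OF h1] by simp_all
    have e2: "insert a' T' \<inter> {..<k} = T'" "insert a' T' \<inter> {k..<n} = {a'}" using ins_hi[OF h2] by simp_all
    have "{a} = {a'}" using e1(2) e2(2) h(5) by simp
    moreover have "T = T'" using e1(1) e2(1) h(5) by simp
    ultimately show "x = y" using x y by simp
  qed
  have c1: "card F1 = k * ((n - k) choose 3)"
    unfolding F1_def using inj1 by (simp add: card_image card_cartesian_product T1_def n_subsets)
  have c2: "card F2 = (n - k) * (k choose 3)"
    unfolding F2_def using inj2 by (simp add: card_image card_cartesian_product T2_def n_subsets)
  have s1: "F1 \<subseteq> B_edges n k"
  proof
    fix S assume "S \<in> F1"
    then obtain a T where h: "a < k" "T \<subseteq> {k..<n}" "card T = 3" "S = insert a T"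
      unfolding F1_def T1_def by auto
    show "S \<in> B_edges n k" using ins_lo[OF h(1-3) assms] h(3,4)
      unfolding B_edges_def good4_def by simp
  qed
  have s2: "F2 \<subseteq> B_edges n k"
  proof
    fix S assume "S \<in> F2"
    then obtain a T where h: "a \<in> {k..<n}" "T \<subseteq> {..<k}" "card T = 3" "S = insert a T"
      unfolding F2_def T2_def by auto
    show "S \<in> B_edges n k" using ins_hi[OF h(1-3)] h(3,4)
      unfolding B_edges_def good4_def by simp
  qed
  have d: "F1 \<inter> F2 = {}"
  proof (rule ccontr)
    assume "F1 \<inter> F2 \<noteq> {}"
    then obtain S where "S \<in> F1" "S \<in> F2" by blast
    then obtain a T a' T' where h: "a < k" "T \<subseteq> {k..<n}" "card T = 3" "S = insert a T"
      "a' \<in> {k..<n}" "T' \<subseteq> {..<k}" "card T' = 3" "S = insert a' T'"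
      unfolding F1_def T1_def F2_def T2_def by auto
    have "card (S \<inter> {..<k}) = 1" using ins_lo(3)[OF h(1-3) assms] h(4) by simp
    moreover have "card (S \<inter> {..<k}) = 3" using ins_hi(3)[OF h(5-7)] h(8) h(7) by simp
    ultimately show False by simp
  qed
  have fB: "finite (B_edges n k)" unfolding B_edges_def
    by (rule finite_subset[of _ "Pow {..<n}"]) auto
  have "card F1 + card F2 = card (F1 \<union> F2)"
    using d finite_subset[OF s1 fB] finite_subset[OF s2 fB] by (intro card_Un_disjoint[symmetric]) auto
  also have "\<dots> \<le> card (B_edges n k)" using s1 s2 fB by (intro card_mono) auto
  finally show ?thesis using c1 c2 by simp
qed

lemma b_ge: "k \<le> n \<Longrightarrow> card (B_edges n k) \<le> b n"
proof -
  assume "k \<le> n"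
  have "{card (B_edges n k) | k. k \<le> n} = (\<lambda>k. card (B_edges n k)) ` {..n}" by auto
  then have "finite {card (B_edges n k) | k. k \<le> n}" by simp
  then show ?thesis unfolding b_def using \<open>k \<le> n\<close> by (intro Max_ge) auto
qed

lemma b_lower:
  assumes "5 \<le> n"
  shows "real n ^ 4 / 48 - 20 * real n ^ 3 / 48 \<le> real (b n)"
proof -
  define k where "k = n div 2"
  have k: "n = 2 * k \<or> n = 2 * k + 1" unfolding k_def by presburger
  have K0: "0 \<le> real k" by simp
  show ?thesis
  proof (cases "n = 2 * k")
    case True
    have h: "k * ((n - k) choose 3) + (n - k) * (k choose 3) \<le> b n"
      using card_B[of k n] b_ge[of k n] True by simp
    have nk: "n - k = k" using True by simp
    have "k * (k choose 3) + k * (k choose 3) \<le> b n" using h[unfolded nk] .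
    then have "real (k * (k choose 3) + k * (k choose 3)) \<le> real (b n)" by (simp only: of_nat_le_iff)
    then have ineq: "real k * (real k * (real k - 1) * (real k - 2) / 6) + real k * (real k * (real k - 1) * (real k - 2) / 6) \<le> real (b n)"
      by (simp only: of_nat_add of_nat_mult choose3_real)
    have eq: "real n ^ 4 / 48 - 20 * real n ^ 3 / 48 = (2*real k)^4/48 - 20*(2*real k)^3/48" using True by simp
    show ?thesis unfolding eq by (rule order.trans[OF poly_even[OF K0] ineq])
  next
    case False
    then have n1: "n = 2 * k + 1" using k by simp
    have h: "k * ((n - k) choose 3) + (n - k) * (k choose 3) \<le> b n"
      using card_B[of k n] b_ge[of k n] n1 by simp
    have nk: "n - k = k + 1" using n1 by simp
    have "k * ((k+1) choose 3) + (k+1) * (k choose 3) \<le> b n" using h[unfolded nk] .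
    then have "real (k * ((k+1) choose 3) + (k+1) * (k choose 3)) \<le> real (b n)" by (simp only: of_nat_le_iff)
    then have "real k * (real (k+1) * (real (k+1) - 1) * (real (k+1) - 2) / 6) + real (k+1) * (real k * (real k - 1) * (real k - 2) / 6) \<le> real (b n)"
      by (simp only: of_nat_add of_nat_mult choose3_real)
    then have ineq: "real k * ((real k + 1) * (real k + 1 - 1) * (real k + 1 - 2) / 6) + (real k + 1) * (real k * (real k - 1) * (real k - 2) / 6) \<le> real (b n)"
      by (simp add: add.commute)
    have eq: "real n ^ 4 / 48 - 20 * real n ^ 3 / 48 = (2*real k+1)^4/48 - 20*(2*real k+1)^3/48" using n1 by (simp add: add.commute)
    show ?thesis unfolding eq by (rule order.trans[OF poly_odd[OF K0] ineq])
  qed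
qed




lemma sum_pair: "(\<Sum>p\<in>A\<times>B. h p) = (\<Sum>x\<in>A. \<Sum>y\<in>B. h (x,y))"
  by (simp add: sum.cartesian_product)

lemma good4_parity:
  fixes \<sigma> :: "'a \<Rightarrow> bool"
  assumes "distinct [a1,a2,a3,a4]" "{a1,a2,a3,a4} \<subseteq> V"
  shows "good4 {x\<in>V. \<sigma> x} (V - {x\<in>V. \<sigma> x}) {a1,a2,a3,a4} \<longleftrightarrow> ((\<sigma> a1 \<noteq> \<sigma> a2) \<noteq> (\<sigma> a3 \<noteq> \<sigma> a4))"
  using assms
  by (cases "\<sigma> a1"; cases "\<sigma> a2"; cases "\<sigma> a3"; cases "\<sigma> a4") (auto simp: good4_def Int_insert_left card_insert_if)


lemma main_bound:
  fixes V :: "'a set" and E :: "'a set set"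
  assumes U: "uniform4 V E" and nC: "\<not> contains_C3 E" and n6: "card V \<ge> 6"
  shows "\<exists>V1 V2. V1 \<union> V2 = V \<and> V1 \<inter> V2 = {} \<and>
     real (card {S. S \<subseteq> V \<and> card S = 4 \<and> \<not> correct4 V1 V2 E S})
       \<le> 219 * (real (card V) ^ 4 / 2 - 24 * real (card E))"
proof -
  have fin: "finite V" using U unfolding uniform4_def by simp
  define n where "n = real (card V)"
  define adj where "adj p q = ({fst p, snd p, fst q, snd q} \<in> E)" for p q :: "'a \<times> 'a"
  have Ec: "card S = 4" if "S \<in> E" for S using U that unfolding uniform4_def by simp
  have adj_sym: "adj q p" if "adj p q" for p q
  proof -
    have "{fst q, snd q, fst p, snd p} = {fst p, snd p, fst q, snd q}" by auto
    then show ?thesis using that unfolding adj_def by simp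
  qed
  have tf: False if "p \<in> V\<times>V" "q \<in> V\<times>V" "r \<in> V\<times>V" "adj p q" "adj p r" "adj q r" for p q r
  proof -
    have d1: "distinct [fst p, snd p, fst q, snd q]" by (rule card4_distinct[OF Ec[OF that(4)[unfolded adj_def]]])
    have d2: "distinct [fst p, snd p, fst r, snd r]" by (rule card4_distinct[OF Ec[OF that(5)[unfolded adj_def]]])
    have d3: "distinct [fst q, snd q, fst r, snd r]" by (rule card4_distinct[OF Ec[OF that(6)[unfolded adj_def]]])
    have "distinct [fst p, snd p, fst q, snd q, fst r, snd r]" using d1 d2 d3 by auto
    then have "contains_C3 E" unfolding contains_C3_def using that(4-6) unfolding adj_def by blast
    then show False using nC by simp
  qed
  have VVne: "V \<times> V \<noteq> {}" using n6 by auto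
  obtain v where v: "v \<in> V \<times> V"
    "(\<Sum>p\<in>V\<times>V. \<Sum>q\<in>V\<times>V. of_bool (adj p q \<noteq> (adj v p \<noteq> adj v q)) :: real)
            \<le> 3 * (real (card (V\<times>V))^2/2 - (\<Sum>p\<in>V\<times>V. \<Sum>q\<in>V\<times>V. of_bool (adj p q)))"
    using furedi[of "V \<times> V" adj] fin VVne adj_sym tf by blast
  define f where "f x y = adj v (x, y)" for x y
  have fsym: "f x y = f y x" for x y
  proof -
    have "{fst v, snd v, x, y} = {fst v, snd v, y, x}" by auto
    then show ?thesis unfolding f_def adj_def by simp
  qed
  define mi where "mi a1 a2 a3 a4 = (of_bool (mmf (\<lambda>S. S \<in> E) f a1 a2 a3 a4) :: real)" for a1 a2 a3 a4
  define Mism where "Mism = (\<Sum>a1\<in>V. \<Sum>a2\<in>V. \<Sum>a3\<in>V. \<Sum>a4\<in>V. mi a1 a2 a3 a4)"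
  have "(\<Sum>p\<in>V\<times>V. \<Sum>q\<in>V\<times>V. of_bool (adj p q \<noteq> (adj v p \<noteq> adj v q)) :: real) = Mism"
    unfolding Mism_def mi_def sum_pair mmf_def f_def adj_def by simp
  moreover have "real (card (V\<times>V))^2/2 = n^4/2" unfolding n_def by (simp add: card_cartesian_product power_mult_distrib power2_eq_square power4_eq_xxxx)
  moreover have "(\<Sum>p\<in>V\<times>V. \<Sum>q\<in>V\<times>V. (of_bool (adj p q) :: real)) \<ge> 24 * real (card E)"
  proof -
    have "(\<Sum>p\<in>V\<times>V. \<Sum>q\<in>V\<times>V. (of_bool (adj p q) :: real)) = (\<Sum>pq\<in>(V\<times>V)\<times>(V\<times>V). of_bool (adj (fst pq) (snd pq)))"
      by (simp only: sum_pair fst_conv snd_conv)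
    also have "\<dots> = real (card ((V\<times>V)\<times>(V\<times>V) \<inter> {pq. adj (fst pq) (snd pq)}))"
      using fin by simp
    also have "(V\<times>V)\<times>(V\<times>V) \<inter> {pq. adj (fst pq) (snd pq)} = {pq \<in> (V\<times>V)\<times>(V\<times>V). {fst (fst pq), snd (fst pq), fst (snd pq), snd (snd pq)} \<in> E}"
      unfolding adj_def by auto
    finally have eqc: "(\<Sum>p\<in>V\<times>V. \<Sum>q\<in>V\<times>V. (of_bool (adj p q) :: real)) = real (card {pq \<in> (V\<times>V)\<times>(V\<times>V). {fst (fst pq), snd (fst pq), fst (snd pq), snd (snd pq)} \<in> E})" .
    have "real (24 * card E) \<le> real (card {pq \<in> (V\<times>V)\<times>(V\<times>V). {fst (fst pq), snd (fst pq), fst (snd pq), snd (snd pq)} \<in> E})"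
      using count24[OF U] by (simp only: of_nat_le_iff)
    then show ?thesis using eqc by simp
  qed
  ultimately have MismB: "Mism \<le> 3 * (n^4/2 - 24 * real (card E))" using v(2) by (smt (verit))
  obtain \<sigma> :: "'a \<Rightarrow> bool" and cc where cut:
    "real (card V)^2 * (\<Sum>x\<in>V. \<Sum>y\<in>V. of_bool (x \<noteq> y \<and> f x y \<noteq> ((\<sigma> x \<noteq> \<sigma> y) \<noteq> cc)))
     \<le> 36 * (\<Sum>a1\<in>V. \<Sum>a2\<in>V. \<Sum>a3\<in>V. \<Sum>a4\<in>V. (of_bool (mmf (\<lambda>S. S \<in> E) f a1 a2 a3 a4) :: real))"
    using cut_approx[of V f "\<lambda>S. S \<in> E", OF fin n6 fsym] by blast
  define bp where "bp x y = (x \<noteq> y \<and> f x y \<noteq> ((\<sigma> x \<noteq> \<sigma> y) \<noteq> cc))" for x y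
  define Bd where "Bd = (\<Sum>x\<in>V. \<Sum>y\<in>V. (of_bool (bp x y) :: real))"
  have cutB: "n^2 * Bd \<le> 36 * Mism" using cut unfolding n_def Bd_def bp_def Mism_def mi_def .
  define V1 where "V1 = {x \<in> V. \<sigma> x}"
  define V2 where "V2 = V - V1"
  define Inc where "Inc = {S. S \<subseteq> V \<and> card S = 4 \<and> \<not> correct4 V1 V2 E S}"
  define Bad where "Bad = {t \<in> V\<times>V\<times>V\<times>V. (case t of (a1,a2,a3,a4) \<Rightarrow> mmf (\<lambda>S. S \<in> E) f a1 a2 a3 a4 \<or> bp a1 a2 \<or> bp a3 a4)}"
  have IncSub: "Inc \<subseteq> (\<lambda>(a1,a2,a3,a4). {a1,a2,a3,a4}) ` Bad"
  proof
    fix S assume "S \<in> Inc"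
    then have S: "S \<subseteq> V" "card S = 4" "\<not> correct4 V1 V2 E S" unfolding Inc_def by auto
    obtain a1 a2 a3 a4 where a: "S = {a1,a2,a3,a4}" "distinct [a1,a2,a3,a4]" using card4_obtain[OF S(2)] by blast
    have inV: "{a1,a2,a3,a4} \<subseteq> V" using S(1) a(1) by simp
    have "mmf (\<lambda>S. S \<in> E) f a1 a2 a3 a4 \<or> bp a1 a2 \<or> bp a3 a4"
    proof (rule ccontr)
      assume "\<not> ?thesis"
      then have h: "\<not> mmf (\<lambda>S. S \<in> E) f a1 a2 a3 a4" "\<not> bp a1 a2" "\<not> bp a3 a4" by auto
      have "(S \<in> E) = ((\<sigma> a1 \<noteq> \<sigma> a2) \<noteq> (\<sigma> a3 \<noteq> \<sigma> a4))"
        using h a unfolding mmf_def bp_def by auto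
      also have "\<dots> = good4 V1 V2 S" using good4_parity[OF a(2) inV, of \<sigma>] a(1) unfolding V2_def V1_def by simp
      finally have "correct4 V1 V2 E S" unfolding correct4_def by auto
      then show False using S(3) by simp
    qed
    moreover have "(a1,a2,a3,a4) \<in> V\<times>V\<times>V\<times>V" using inV by simp
    ultimately have "(a1,a2,a3,a4) \<in> Bad" unfolding Bad_def by simp
    then show "S \<in> (\<lambda>(a1,a2,a3,a4). {a1,a2,a3,a4}) ` Bad" using a(1) by force
  qed
  have finBad: "finite Bad" unfolding Bad_def using fin by simp
  have "card Inc \<le> card ((\<lambda>(a1,a2,a3,a4). {a1,a2,a3,a4}) ` Bad)"
    using IncSub finBad by (intro card_mono) auto
  also have "\<dots> \<le> card Bad" using finBad by (rule card_image_le)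
  finally have c1: "real (card Inc) \<le> real (card Bad)" by simp
  have "real (card Bad) = (\<Sum>t\<in>V\<times>V\<times>V\<times>V. (of_bool (case t of (a1,a2,a3,a4) \<Rightarrow> mmf (\<lambda>S. S \<in> E) f a1 a2 a3 a4 \<or> bp a1 a2 \<or> bp a3 a4) :: real))"
    using fin unfolding Bad_def by (simp add: Collect_conj_eq[symmetric] Int_def)
  also have "\<dots> = (\<Sum>a1\<in>V. \<Sum>a2\<in>V. \<Sum>a3\<in>V. \<Sum>a4\<in>V. (of_bool (mmf (\<lambda>S. S \<in> E) f a1 a2 a3 a4 \<or> bp a1 a2 \<or> bp a3 a4) :: real))"
    by (simp add: sum_pair)
  also have "\<dots> \<le> (\<Sum>a1\<in>V. \<Sum>a2\<in>V. \<Sum>a3\<in>V. \<Sum>a4\<in>V. mi a1 a2 a3 a4 + of_bool (bp a1 a2) + of_bool (bp a3 a4))"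
    unfolding mi_def by (intro sum_mono) auto
  also have "\<dots> = Mism + (\<Sum>a1\<in>V. \<Sum>a2\<in>V. \<Sum>a3\<in>V. \<Sum>a4\<in>V. (of_bool (bp a1 a2) :: real))
                  + (\<Sum>a1\<in>V. \<Sum>a2\<in>V. \<Sum>a3\<in>V. \<Sum>a4\<in>V. (of_bool (bp a3 a4) :: real))"
    unfolding Mism_def by (simp only: sum.distrib)
  also have "(\<Sum>a1\<in>V. \<Sum>a2\<in>V. \<Sum>a3\<in>V. \<Sum>a4\<in>V. (of_bool (bp a1 a2) :: real)) = n^2 * Bd"
    unfolding Bd_def n_def by (simp add: sum_distrib_left power2_eq_square mult.assoc)
  also have "(\<Sum>a1\<in>V. \<Sum>a2\<in>V. \<Sum>a3\<in>V. \<Sum>a4\<in>V. (of_bool (bp a3 a4) :: real)) = n^2 * Bd"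
    unfolding Bd_def n_def by (simp add: power2_eq_square)
  finally have c2: "real (card Inc) \<le> Mism + n^2 * Bd + n^2 * Bd" using c1 by linarith
  have "real (card Inc) \<le> 73 * Mism" using c2 cutB by linarith
  also have "\<dots> \<le> 219 * (n^4/2 - 24 * real (card E))" using MismB by linarith
  finally have "real (card Inc) \<le> 219 * (n^4/2 - 24 * real (card E))" .
  moreover have "V1 \<union> V2 = V" "V1 \<inter> V2 = {}" unfolding V1_def V2_def by auto
  ultimately show ?thesis unfolding Inc_def n_def by blast
qed


theorem theorem3:
  shows "\<forall>\<epsilon>::real. \<epsilon> > 0 \<longrightarrow> (\<exists>\<eta>::real. \<eta> > 0 \<and> (\<exists>N::nat. \<forall>n\<ge>N.
      \<forall>(V::nat set) (E::nat set set).
        uniform4 V E \<and> card V = n \<and> \<not> contains_C3 E \<and>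
        real (card E) > real (b n) - \<eta> * real n ^ 4 \<longrightarrow>
        (\<exists>V1 V2. V1 \<union> V2 = V \<and> V1 \<inter> V2 = {} \<and>
           real (card {S. S \<subseteq> V \<and> card S = 4 \<and> \<not> correct4 V1 V2 E S}) \<le> \<epsilon> * real n ^ 4)))"
proof (intro allI impI)
  fix \<epsilon> :: real assume ep: "\<epsilon> > 0"
  define \<eta> where "\<eta> = \<epsilon> / 10512"
  define N where "N = max 6 (nat \<lceil>4380 / \<epsilon>\<rceil>)"
  have eta0: "\<eta> > 0" unfolding \<eta>_def using ep by simp
  have main: "\<exists>V1 V2. V1 \<union> V2 = V \<and> V1 \<inter> V2 = {} \<and>
           real (card {S. S \<subseteq> V \<and> card S = 4 \<and> \<not> correct4 V1 V2 E S}) \<le> \<epsilon> * real n ^ 4"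
    if nN: "n \<ge> N" and H: "uniform4 V E \<and> card V = n \<and> \<not> contains_C3 E \<and>
        real (card E) > real (b n) - \<eta> * real n ^ 4" for n and V :: "nat set" and E
  proof -
    have n6: "6 \<le> n" using nN unfolding N_def by simp
    have "real (nat \<lceil>4380 / \<epsilon>\<rceil>) \<le> real n" using nN unfolding N_def by simp
    then have n2: "4380 / \<epsilon> \<le> real n" by linarith
    then have n3: "4380 \<le> \<epsilon> * real n" using ep by (simp add: field_simps)
    have cV: "card V = n" using H by simp
    obtain V1 V2 where P: "V1 \<union> V2 = V" "V1 \<inter> V2 = {}"
      "real (card {S. S \<subseteq> V \<and> card S = 4 \<and> \<not> correct4 V1 V2 E S})
       \<le> 219 * (real (card V) ^ 4 / 2 - 24 * real (card E))"
      using main_bound[of V E] H n6 by auto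
    have bl: "real n ^ 4 / 48 - 20 * real n ^ 3 / 48 \<le> real (b n)" using b_lower n6 by simp
    have hE: "real (card E) > real (b n) - \<eta> * real n ^ 4" using H by simp
    have "219 * (real n ^ 4 / 2 - 24 * real (card E)) \<le> 2190 * real n ^ 3 + 5256 * \<eta> * real n ^ 4"
      using bl hE by simp
    also have "2190 * real n ^ 3 \<le> (\<epsilon> / 2) * real n ^ 4"
    proof -
      have "4380 * real n ^ 3 \<le> (\<epsilon> * real n) * real n ^ 3" using n3 by (simp add: mult_right_mono)
      also have "\<dots> = \<epsilon> * real n ^ 4" by (simp add: power_def)
      finally show ?thesis by simp
    qed
    also have "5256 * \<eta> * real n ^ 4 = (\<epsilon> / 2) * real n ^ 4" unfolding \<eta>_def by simp
    finally have "219 * (real n ^ 4 / 2 - 24 * real (card E)) \<le> \<epsilon> * real n ^ 4" by simp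
    then show ?thesis using P cV by (intro exI[of _ V1] exI[of _ V2]) auto
  qed
  show "\<exists>\<eta>::real. \<eta> > 0 \<and> (\<exists>N::nat. \<forall>n\<ge>N.
      \<forall>(V::nat set) (E::nat set set).
        uniform4 V E \<and> card V = n \<and> \<not> contains_C3 E \<and>
        real (card E) > real (b n) - \<eta> * real n ^ 4 \<longrightarrow>
        (\<exists>V1 V2. V1 \<union> V2 = V \<and> V1 \<inter> V2 = {} \<and>
           real (card {S. S \<subseteq> V \<and> card S = 4 \<and> \<not> correct4 V1 V2 E S}) \<le> \<epsilon> * real n ^ 4))"
    using eta0 main by blast
qed


end
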